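(* Let $(X,\delta_X)$ be a multi-retraceable represented space. Then there is a total representation $\delta:2^\mathbb{N}\to X$ (i.e. a surjective map defined on all of Cantor space $2^\mathbb{N}\subseteq\mathbb{N}^\mathbb{N}$) such that $\delta\equiv\delta_X$. In particular, $X$ is compact with respect to the final topology of $\delta_X$.
   Context: A represented space $(X,\delta_X)$ is a set $X$ with a surjective partial map $\delta_X:\subseteq\mathbb{N}^\mathbb{N}\to X$; it carries the final topology induced by $\delta_X$. For representations $\delta_1,\delta_2$ of the same set, $\delta_1\le\delta_2$ means $\delta_1=\delta_2F$ for some computable partial $F:\subseteq\mathbb{N}^\mathbb{N}\to\mathbb{N}^\mathbb{N}$, and $\equiv$ is the induced equivalence. For $p\in\mathbb{N}^\mathbb{N}$, $p-1$ is the concatenation of $p(0)-1,p(1)-1,\dots$ with $0-1$ read as the empty word. The completion $\overline X=X\cup\{\bot\}$ has the total representation $\delta_{\overline X}(p)=\delta_X(p-1)$ if $p-1$ is an infinite sequence in $\mathrm{dom}(\delta_X)$ and $\delta_{\overline X}(p)=\bot$ otherwise. $X$ is multi-retraceable if there is a computable multi-valued map $r:\overline X\rightrightarrows X$ with $r(x)=\{x\}$ for $x\in X$ (computable meaning it has a computable realizer $F$ with $\delta_X F(p)\in r(\delta_{\overline X}(p))$ for all $p$). *)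

theory Defs
  imports "HOL-Analysis.Analysis" "HOL-Library.Nat_Bijection"
begin

type_synonym baire = "nat \<Rightarrow> nat"

inductive rec_fn :: "nat \<Rightarrow> (nat list \<Rightarrow> nat) \<Rightarrow> bool" where
  rf_zero: "rec_fn n (\<lambda>_. 0)"
| rf_succ: "rec_fn 1 (\<lambda>xs. Suc (hd xs))"
| rf_proj: "i < n \<Longrightarrow> rec_fn n (\<lambda>xs. xs ! i)"
| rf_comp: "rec_fn m g \<Longrightarrow> length fs = m \<Longrightarrow> (\<forall>f\<in>set fs. rec_fn n f)
             \<Longrightarrow> rec_fn n (\<lambda>xs. g (map (\<lambda>f. f xs) fs))"
| rf_prim: "rec_fn n g \<Longrightarrow> rec_fn (Suc (Suc n)) h
             \<Longrightarrow> rec_fn (Suc n) (\<lambda>xs. rec_nat (g (tl xs)) (\<lambda>k r. h (k # r # tl xs)) (hd xs))"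
| rf_mu: "rec_fn (Suc n) g \<Longrightarrow> (\<forall>xs. length xs = n \<longrightarrow> (\<exists>y. g (y # xs) = 0))
             \<Longrightarrow> rec_fn n (\<lambda>xs. LEAST y. g (y # xs) = 0)"

definition prefix_code :: "baire \<Rightarrow> nat \<Rightarrow> nat" where
  "prefix_code p n = list_encode (map p [0..<n])"

text \<open>F :\<subseteq> Baire \<rightarrow> Baire with domain D is computable: there is a total recursive g which,
  given a code of a finite prefix of the input and an output index i, either answers 0
  (no answer yet) or F(p)(i)+1, and every output value is eventually produced.\<close>
definition computable_on :: "baire set \<Rightarrow> (baire \<Rightarrow> baire) \<Rightarrow> bool" where
  "computable_on D F \<longleftrightarrow> (\<exists>g. rec_fn 2 g \<and>
     (\<forall>p\<in>D. \<forall>i. (\<forall>n. g [prefix_code p n, i] \<in> {0, Suc (F p i)}) \<and>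
                  (\<exists>n. g [prefix_code p n, i] = Suc (F p i))))"

definition representation :: "baire set \<Rightarrow> (baire \<Rightarrow> 'a) \<Rightarrow> 'a set \<Rightarrow> bool" where
  "representation D \<delta> X \<longleftrightarrow> \<delta> ` D = X"

definition rep_le :: "baire set \<Rightarrow> (baire \<Rightarrow> 'a) \<Rightarrow> baire set \<Rightarrow> (baire \<Rightarrow> 'a) \<Rightarrow> bool" where
  "rep_le D1 \<delta>1 D2 \<delta>2 \<longleftrightarrow> (\<exists>F. computable_on D1 F \<and> (\<forall>p\<in>D1. F p \<in> D2 \<and> \<delta>1 p = \<delta>2 (F p)))"

definition rep_equiv :: "baire set \<Rightarrow> (baire \<Rightarrow> 'a) \<Rightarrow> baire set \<Rightarrow> (baire \<Rightarrow> 'a) \<Rightarrow> bool" where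
  "rep_equiv D1 \<delta>1 D2 \<delta>2 \<longleftrightarrow> rep_le D1 \<delta>1 D2 \<delta>2 \<and> rep_le D2 \<delta>2 D1 \<delta>1"

definition cantor_space :: "baire set" where
  "cantor_space = {p. \<forall>n. p n \<le> 1}"

definition minus_one :: "baire \<Rightarrow> baire option" where
  "minus_one p = (if infinite {n. p n \<noteq> 0}
     then Some (\<lambda>k. p (Infinite_Set.enumerate {n. p n \<noteq> 0} k) - 1) else None)"

text \<open>Completion: X-bar = X \<union> {\<bottom>}, modelled by 'a option with None = \<bottom>; total representation.\<close>
definition completion_rep :: "baire set \<Rightarrow> (baire \<Rightarrow> 'a) \<Rightarrow> baire \<Rightarrow> 'a option" where
  "completion_rep D \<delta> p = (case minus_one p of Some q \<Rightarrow> if q \<in> D then Some (\<delta> q) else None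
                                             | None \<Rightarrow> None)"

definition multi_retraceable :: "baire set \<Rightarrow> (baire \<Rightarrow> 'a) \<Rightarrow> 'a set \<Rightarrow> bool" where
  "multi_retraceable D \<delta> X \<longleftrightarrow> (\<exists>r :: 'a option \<Rightarrow> 'a set.
      (\<forall>x\<in>X. r (Some x) = {x}) \<and> (\<forall>y \<in> Some ` X \<union> {None}. r y \<subseteq> X) \<and>
      (\<exists>F. computable_on UNIV F \<and>
           (\<forall>p. F p \<in> D \<and> \<delta> (F p) \<in> r (completion_rep D \<delta> p))))"

definition final_open :: "baire set \<Rightarrow> (baire \<Rightarrow> 'a) \<Rightarrow> 'a set \<Rightarrow> 'a set \<Rightarrow> bool" where
  "final_open D \<delta> X U \<longleftrightarrow> U \<subseteq> X \<and> openin (top_of_set D) {p\<in>D. \<delta> p \<in> U}"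

lemma istopology_final_open:
  assumes "\<delta> ` D \<subseteq> X"
  shows "istopology (final_open D \<delta> X)"
  unfolding istopology_def final_open_def
proof (intro conjI allI impI ballI)
  fix S T assume a: "S \<subseteq> X \<and> openin (top_of_set D) {p \<in> D. \<delta> p \<in> S}"
    "T \<subseteq> X \<and> openin (top_of_set D) {p \<in> D. \<delta> p \<in> T}"
  show "S \<inter> T \<subseteq> X" using a by auto
  have "{p \<in> D. \<delta> p \<in> S \<inter> T} = {p \<in> D. \<delta> p \<in> S} \<inter> {p \<in> D. \<delta> p \<in> T}" by auto
  then show "openin (top_of_set D) {p \<in> D. \<delta> p \<in> S \<inter> T}" using a by auto
next
  fix K assume a: "\<forall>S\<in>K. S \<subseteq> X \<and> openin (top_of_set D) {p \<in> D. \<delta> p \<in> S}"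
  show "\<Union> K \<subseteq> X" using a by auto
  have "{p \<in> D. \<delta> p \<in> \<Union> K} = (\<Union>S\<in>K. {p \<in> D. \<delta> p \<in> S})" by auto
  then show "openin (top_of_set D) {p \<in> D. \<delta> p \<in> \<Union> K}" using a by auto
qed

definition final_topology :: "baire set \<Rightarrow> (baire \<Rightarrow> 'a) \<Rightarrow> 'a set \<Rightarrow> 'a topology" where
  "final_topology D \<delta> X = topology (final_open D \<delta> X)"

end

theory Submission
  imports Defs
begin



definition rfun :: "nat \<Rightarrow> (nat list \<Rightarrow> nat) \<Rightarrow> bool" where
  "rfun n f \<longleftrightarrow> (\<exists>g. rec_fn n g \<and> (\<forall>xs. length xs = n \<longrightarrow> g xs = f xs))"

lemma rfun_cong: "rfun n f \<Longrightarrow> (\<And>xs. length xs = n \<Longrightarrow> f xs = f' xs) \<Longrightarrow> rfun n f'"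
  unfolding rfun_def by metis

lemma rfun_rec: "rec_fn n f \<Longrightarrow> rfun n f"
  unfolding rfun_def by blast

lemma rfun_const0: "rfun n (\<lambda>_. 0)"
  by (rule rfun_rec) (rule rf_zero)

lemma rfun_suc1: "rfun 1 (\<lambda>xs. Suc (hd xs))"
  by (rule rfun_rec) (rule rf_succ)

lemma rfun_proj: "i < n \<Longrightarrow> rfun n (\<lambda>xs. xs ! i)"
  by (rule rfun_rec) (rule rf_proj)

lemma rfun_comp:
  assumes g: "rfun m g" and len: "length fs = m" and fs: "\<forall>f\<in>set fs. rfun n f"
  shows "rfun n (\<lambda>xs. g (map (\<lambda>f. f xs) fs))"
proof -
  from fs have "\<forall>f\<in>set fs. \<exists>w. rec_fn n w \<and> (\<forall>xs. length xs = n \<longrightarrow> w xs = f xs)"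
    unfolding rfun_def by blast
  then obtain W where W: "\<forall>f\<in>set fs. rec_fn n (W f) \<and> (\<forall>xs. length xs = n \<longrightarrow> W f xs = f xs)"
    by metis
  from g obtain g' where g': "rec_fn m g'" "\<forall>xs. length xs = m \<longrightarrow> g' xs = g xs"
    unfolding rfun_def by blast
  have "rec_fn n (\<lambda>xs. g' (map (\<lambda>f. f xs) (map W fs)))"
    by (rule rf_comp[OF g'(1)]) (use len W in auto)
  moreover have "g' (map (\<lambda>f. f xs) (map W fs)) = g (map (\<lambda>f. f xs) fs)" if "length xs = n" for xs
  proof -
    have "map (\<lambda>f. f xs) (map W fs) = map (\<lambda>f. f xs) fs"
      unfolding map_map by (rule map_cong) (use W that in auto)
    then show ?thesis using g'(2) len by (simp only: length_map)
  qed
  ultimately show ?thesis unfolding rfun_def by blast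
qed

lemma rfun_prim:
  assumes g: "rfun n g" and h: "rfun (Suc (Suc n)) h"
  shows "rfun (Suc n) (\<lambda>xs. rec_nat (g (tl xs)) (\<lambda>k r. h (k # r # tl xs)) (hd xs))"
proof -
  from g obtain g' where g': "rec_fn n g'" "\<forall>xs. length xs = n \<longrightarrow> g' xs = g xs"
    unfolding rfun_def by blast
  from h obtain h' where h': "rec_fn (Suc (Suc n)) h'" "\<forall>xs. length xs = Suc (Suc n) \<longrightarrow> h' xs = h xs"
    unfolding rfun_def by blast
  have "rec_nat (g' (tl xs)) (\<lambda>k r. h' (k # r # tl xs)) y = rec_nat (g (tl xs)) (\<lambda>k r. h (k # r # tl xs)) y"
    if "length xs = Suc n" for xs y
    using that g'(2) h'(2) by (induct y) auto
  then show ?thesis unfolding rfun_def using rf_prim[OF g'(1) h'(1)] by auto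
qed

lemma rfun_mu:
  assumes g: "rfun (Suc n) g" and reg: "\<And>xs. length xs = n \<Longrightarrow> \<exists>y. g (y # xs) = 0"
  shows "rfun n (\<lambda>xs. LEAST y. g (y # xs) = 0)"
proof -
  from g obtain g' where g': "rec_fn (Suc n) g'" "\<forall>xs. length xs = Suc n \<longrightarrow> g' xs = g xs"
    unfolding rfun_def by blast
  have e: "g' (y # xs) = g (y # xs)" if "length xs = n" for xs y using g'(2) that by simp
  have "rec_fn n (\<lambda>xs. LEAST y. g' (y # xs) = 0)"
    by (rule rf_mu[OF g'(1)]) (use reg e in auto)
  then show ?thesis unfolding rfun_def using e by auto
qed

lemma rfun_comp1: "rfun 1 g \<Longrightarrow> rfun n f \<Longrightarrow> rfun n (\<lambda>xs. g [f xs])"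
  using rfun_comp[of 1 g "[f]" n] by simp

lemma rfun_comp2: "rfun 2 g \<Longrightarrow> rfun n f1 \<Longrightarrow> rfun n f2 \<Longrightarrow> rfun n (\<lambda>xs. g [f1 xs, f2 xs])"
  using rfun_comp[of 2 g "[f1, f2]" n] by simp

lemma rfun_comp3: "rfun 3 g \<Longrightarrow> rfun n f1 \<Longrightarrow> rfun n f2 \<Longrightarrow> rfun n f3 \<Longrightarrow> rfun n (\<lambda>xs. g [f1 xs, f2 xs, f3 xs])"
  using rfun_comp[of 3 g "[f1, f2, f3]" n] by (simp add: numeral_3_eq_3)

lemma rfun_comp_cons:
  assumes P: "rfun (Suc n) P" and f: "rfun n f"
  shows "rfun n (\<lambda>xs. P (f xs # xs))"
proof -
  have A: "rfun n (\<lambda>xs. P (map (\<lambda>g. g xs) (f # map (\<lambda>i xs. xs ! i) [0..<n])))"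
    by (rule rfun_comp[OF P]) (use f rfun_proj in auto)
  have B: "map (\<lambda>g. g xs) (f # map (\<lambda>i xs. xs ! i) [0..<n]) = f xs # xs" if "length xs = n" for xs
    using that by (simp add: map_nth[symmetric] comp_def) (metis map_nth)
  show ?thesis by (rule rfun_cong[OF A]) (simp only: B)
qed

lemma rfun_const: "rfun n (\<lambda>_. k)"
proof (induct k)
  case 0 then show ?case by (rule rfun_const0)
next
  case (Suc k)
  have "rfun n (\<lambda>xs. (\<lambda>ys. Suc (hd ys)) [k])" by (rule rfun_comp1[OF rfun_suc1 Suc])
  then show ?case by simp
qed

lemma rfun_Suc: "rfun n f \<Longrightarrow> rfun n (\<lambda>xs. Suc (f xs))"
  using rfun_comp1[OF rfun_suc1] by simp

lemma rfun_iter: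
  assumes f: "rfun n f" and b: "rfun n b" and h: "rfun (Suc (Suc n)) h"
  shows "rfun n (\<lambda>xs. rec_nat (b xs) (\<lambda>k r. h (k # r # xs)) (f xs))"
  using rfun_comp_cons[OF rfun_prim[OF b h] f] by simp

lemma rfun_least:
  assumes P: "rfun (Suc n) P" and reg: "\<And>xs. length xs = n \<Longrightarrow> \<exists>y. P (y # xs) = 0"
  shows "rfun n (\<lambda>xs. LEAST y. P (y # xs) = 0)"
  by (rule rfun_mu[OF P reg])

lemma rfun_add2: "rfun 2 (\<lambda>xs. xs ! 0 + xs ! 1)"
proof -
  have A: "rfun 2 (\<lambda>xs. rec_nat (xs ! 1) (\<lambda>k r. Suc ((k # r # xs) ! 1)) (xs ! 0))"
    by (rule rfun_iter rfun_proj rfun_Suc | simp)+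
  have B: "rec_nat y (\<lambda>k r. Suc r) x = x + y" for x y :: nat by (induct x) auto
  show ?thesis by (rule rfun_cong[OF A]) (simp add: B)
qed

lemma rfun_add: "rfun n f \<Longrightarrow> rfun n g \<Longrightarrow> rfun n (\<lambda>xs. f xs + g xs)"
  using rfun_comp2[OF rfun_add2] by simp

lemma rfun_pred1: "rfun 1 (\<lambda>xs. xs ! 0 - 1)"
proof -
  have A: "rfun 1 (\<lambda>xs. rec_nat 0 (\<lambda>k r. (k # r # xs) ! 0) (xs ! 0))"
    by (rule rfun_iter rfun_proj rfun_const | simp)+
  have B: "rec_nat 0 (\<lambda>k r. k) x = x - 1" for x :: nat by (induct x) auto
  show ?thesis by (rule rfun_cong[OF A]) (simp add: B)
qed

lemma rfun_pred: "rfun n f \<Longrightarrow> rfun n (\<lambda>xs. f xs - 1)"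
  using rfun_comp1[OF rfun_pred1] by simp

lemma rfun_sub2: "rfun 2 (\<lambda>xs. xs ! 0 - xs ! 1)"
proof -
  have A: "rfun 2 (\<lambda>xs. rec_nat (xs ! 0) (\<lambda>k r. (k # r # xs) ! 1 - 1) (xs ! 1))"
    by (rule rfun_iter rfun_proj rfun_pred | simp)+
  have B: "rec_nat x (\<lambda>k r. r - Suc 0) y = x - y" for x y :: nat by (induct y) auto
  show ?thesis by (rule rfun_cong[OF A]) (simp add: B)
qed

lemma rfun_sub: "rfun n f \<Longrightarrow> rfun n g \<Longrightarrow> rfun n (\<lambda>xs. f xs - g xs)"
  using rfun_comp2[OF rfun_sub2] by simp

lemma rfun_cond3: "rfun 3 (\<lambda>xs. if xs ! 0 = 0 then xs ! 1 else xs ! 2)"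
proof -
  have A: "rfun 3 (\<lambda>xs. rec_nat (xs ! 1) (\<lambda>k r. (k # r # xs) ! 4) (xs ! 0))"
    by (rule rfun_iter rfun_proj | simp)+
  have B: "rec_nat a (\<lambda>k r. b) c = (if c = 0 then a else b)" for a b c :: nat by (cases c) auto
  show ?thesis by (rule rfun_cong[OF A]) (simp add: B)
qed

lemma rfun_if0: "rfun n c \<Longrightarrow> rfun n f \<Longrightarrow> rfun n g \<Longrightarrow> rfun n (\<lambda>xs. if c xs = 0 then f xs else g xs)"
  by (rule rfun_cong[OF rfun_comp3[OF rfun_cond3, of n c f g]]) simp_all

lemma rfun_ifeq: "rfun n a \<Longrightarrow> rfun n b \<Longrightarrow> rfun n f \<Longrightarrow> rfun n g \<Longrightarrow> rfun n (\<lambda>xs. if a xs = b xs then f xs else g xs)"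
proof -
  assume "rfun n a" "rfun n b" "rfun n f" "rfun n g"
  then have "rfun n (\<lambda>xs. if (a xs - b xs) + (b xs - a xs) = 0 then f xs else g xs)"
    by (intro rfun_if0 rfun_add rfun_sub)
  then show ?thesis by (rule rfun_cong) auto
qed

lemma rfun_ifless: "rfun n a \<Longrightarrow> rfun n b \<Longrightarrow> rfun n f \<Longrightarrow> rfun n g \<Longrightarrow> rfun n (\<lambda>xs. if a xs < b xs then f xs else g xs)"
proof -
  assume "rfun n a" "rfun n b" "rfun n f" "rfun n g"
  then have "rfun n (\<lambda>xs. if Suc (a xs) - b xs = 0 then f xs else g xs)"
    by (intro rfun_if0 rfun_Suc rfun_sub)
  then show ?thesis by (rule rfun_cong) auto
qed




lemma rfun_un: "rfun 1 (\<lambda>xs. F (xs ! 0)) \<Longrightarrow> rfun n f \<Longrightarrow> rfun n (\<lambda>xs. F (f xs))"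
  by (rule rfun_cong[OF rfun_comp1[of "\<lambda>xs. F (xs ! 0)" n f]]) simp_all

lemma rfun_bin: "rfun 2 (\<lambda>xs. F (xs ! 0) (xs ! 1)) \<Longrightarrow> rfun n f \<Longrightarrow> rfun n g \<Longrightarrow> rfun n (\<lambda>xs. F (f xs) (g xs))"
  by (rule rfun_cong[OF rfun_comp2[of "\<lambda>xs. F (xs ! 0) (xs ! 1)" n f g]]) simp_all

lemma rfun_tri1: "rfun 1 (\<lambda>xs. triangle (xs ! 0))"
proof -
  have A: "rfun 1 (\<lambda>xs. rec_nat 0 (\<lambda>k r. (k # r # xs) ! 1 + Suc ((k # r # xs) ! 0)) (xs ! 0))"
    by (rule rfun_iter rfun_proj rfun_const rfun_add rfun_Suc | simp)+
  have B: "rec_nat 0 (\<lambda>k r. Suc (r + k)) x = triangle x" for x by (induct x) auto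
  show ?thesis by (rule rfun_cong[OF A]) (simp add: B)
qed

lemma rfun_tri: "rfun n f \<Longrightarrow> rfun n (\<lambda>xs. triangle (f xs))"
  by (rule rfun_un[OF rfun_tri1])

lemma rfun_penc: "rfun n f \<Longrightarrow> rfun n g \<Longrightarrow> rfun n (\<lambda>xs. prod_encode (f xs, g xs))"
proof -
  assume f: "rfun n f" and g: "rfun n g"
  have "rfun n (\<lambda>xs. triangle (f xs + g xs) + f xs)"
    by (intro rfun_add rfun_tri f g)
  then show ?thesis by (rule rfun_cong) (simp add: prod_encode_def)
qed

definition sroot :: "nat \<Rightarrow> nat" where
  "sroot c = (LEAST s. Suc c - triangle (Suc s) = 0)"

lemma tri_ge: "s \<le> triangle s"
  by (induct s) auto

lemma sroot_props: "triangle (sroot c) \<le> c \<and> c < triangle (Suc (sroot c))"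
proof -
  have ex: "Suc c - triangle (Suc c) = 0" using tri_ge[of "Suc c"] by simp
  have 1: "Suc c - triangle (Suc (sroot c)) = 0"
    unfolding sroot_def by (rule LeastI[where P="\<lambda>s. Suc c - triangle (Suc s) = 0", OF ex])
  have 2: "triangle (sroot c) \<le> c"
  proof (cases "sroot c")
    case 0 then show ?thesis by simp
  next
    case (Suc s)
    have "\<not> (Suc c - triangle (Suc s) = 0)"
      using not_less_Least[of s "\<lambda>s. Suc c - triangle (Suc s) = 0"] Suc unfolding sroot_def by simp
    then show ?thesis using Suc by simp
  qed
  from 1 2 show ?thesis by simp
qed

lemma prod_decode_sroot:
  "prod_decode c = (c - triangle (sroot c), sroot c - (c - triangle (sroot c)))"
proof -
  let ?s = "sroot c" let ?a = "c - triangle ?s"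
  have "?a \<le> ?s" using sroot_props[of c] triangle_Suc[of "sroot c"] by linarith
  then have "prod_encode (?a, ?s - ?a) = c" using sroot_props[of c] by (simp add: prod_encode_def)
  then show ?thesis by (metis prod_encode_inverse)
qed

lemma rfun_sroot1: "rfun 1 (\<lambda>xs. sroot (xs ! 0))"
proof -
  have P: "rfun 2 (\<lambda>xs. Suc (xs ! 1) - triangle (Suc (xs ! 0)))"
    by (intro rfun_sub rfun_Suc rfun_tri rfun_proj) auto
  have reg: "\<exists>y. Suc ((y # xs) ! 1) - triangle (Suc ((y # xs) ! 0)) = 0" for xs :: "nat list"
    using tri_ge[of "Suc (xs ! 0)"] by (intro exI[of _ "xs ! 0"]) simp
  have A: "rfun 1 (\<lambda>xs. LEAST y. Suc ((y # xs) ! 1) - triangle (Suc ((y # xs) ! 0)) = 0)"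
    by (rule rfun_least) (use P reg in \<open>simp_all add: numeral_2_eq_2\<close>)
  show ?thesis by (rule rfun_cong[OF A]) (simp add: sroot_def)
qed

lemma rfun_sroot: "rfun n f \<Longrightarrow> rfun n (\<lambda>xs. sroot (f xs))"
  by (rule rfun_un[OF rfun_sroot1])

lemma rfun_pd1: "rfun n f \<Longrightarrow> rfun n (\<lambda>xs. fst (prod_decode (f xs)))"
proof -
  assume f: "rfun n f"
  have "rfun n (\<lambda>xs. f xs - triangle (sroot (f xs)))"
    by (intro rfun_sub rfun_tri rfun_sroot f)
  then show ?thesis by (rule rfun_cong) (simp add: prod_decode_sroot)
qed

lemma rfun_pd2: "rfun n f \<Longrightarrow> rfun n (\<lambda>xs. snd (prod_decode (f xs)))"
proof -
  assume f: "rfun n f"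
  have "rfun n (\<lambda>xs. sroot (f xs) - (f xs - triangle (sroot (f xs))))"
    by (intro rfun_sub rfun_tri rfun_sroot f)
  then show ?thesis by (rule rfun_cong) (simp add: prod_decode_sroot)
qed

definition lhd :: "nat \<Rightarrow> nat" where "lhd c = fst (prod_decode (c - 1))"
definition ltl :: "nat \<Rightarrow> nat" where "ltl c = snd (prod_decode (c - 1))"

lemma rfun_lhd: "rfun n f \<Longrightarrow> rfun n (\<lambda>xs. lhd (f xs))"
  unfolding lhd_def by (intro rfun_pd1 rfun_pred)
lemma rfun_ltl: "rfun n f \<Longrightarrow> rfun n (\<lambda>xs. ltl (f xs))"
  unfolding ltl_def by (intro rfun_pd2 rfun_pred)

lemma prod_decode_0: "prod_decode 0 = (0, 0)"
  by (simp add: prod_decode_def prod_decode_aux.simps)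

lemma list_decode_ltl: "list_decode (ltl c) = tl (list_decode c)"
proof (cases c)
  case 0 then show ?thesis by (simp add: ltl_def prod_decode_0)
next
  case (Suc m) then show ?thesis by (simp add: ltl_def split: prod.split)
qed

lemma lhd_hd: "c \<noteq> 0 \<Longrightarrow> lhd c = hd (list_decode c)"
  by (cases c) (auto simp: lhd_def split: prod.split)

lemma list_decode_eq_Nil: "list_decode c = [] \<longleftrightarrow> c = 0"
  by (metis list_decode.simps(1) list_decode_inverse list_encode.simps(1))

lemma list_decode_ltl_iter: "list_decode ((ltl ^^ k) c) = drop k (list_decode c)"
  by (induct k) (auto simp: list_decode_ltl drop_Suc tl_drop)

definition llen :: "nat \<Rightarrow> nat" where "llen c = (LEAST k. (ltl ^^ k) c = 0)"
definition lnth :: "nat \<Rightarrow> nat \<Rightarrow> nat" where "lnth c k = lhd ((ltl ^^ k) c)"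

lemma ltl_iter_0_iff: "(ltl ^^ k) c = 0 \<longleftrightarrow> length (list_decode c) \<le> k"
  using list_decode_ltl_iter[of k c] list_decode_eq_Nil by (metis drop_eq_Nil)

lemma llen_eq: "llen c = length (list_decode c)"
  unfolding llen_def ltl_iter_0_iff by (rule Least_equality) auto

lemma lnth_eq: "k < length (list_decode c) \<Longrightarrow> lnth c k = list_decode c ! k"
proof -
  assume k: "k < length (list_decode c)"
  then have ne: "(ltl ^^ k) c \<noteq> 0" using ltl_iter_0_iff by simp
  have "lnth c k = hd (drop k (list_decode c))"
    unfolding lnth_def using lhd_hd[OF ne] list_decode_ltl_iter by simp
  then show ?thesis using k by (simp add: hd_drop_conv_nth)
qed

lemma rfun_ltl_iter: "rfun n f \<Longrightarrow> rfun n g \<Longrightarrow> rfun n (\<lambda>xs. (ltl ^^ (g xs)) (f xs))"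
proof -
  assume f: "rfun n f" and g: "rfun n g"
  have A: "rfun n (\<lambda>xs. rec_nat (f xs) (\<lambda>k r. ltl ((k # r # xs) ! 1)) (g xs))"
    by (intro rfun_iter g f rfun_ltl rfun_proj) auto
  have B: "rec_nat c (\<lambda>k r. ltl r) k = (ltl ^^ k) c" for c k by (induct k) auto
  show ?thesis by (rule rfun_cong[OF A]) (simp add: B)
qed

lemma rfun_lnth: "rfun n f \<Longrightarrow> rfun n g \<Longrightarrow> rfun n (\<lambda>xs. lnth (f xs) (g xs))"
  unfolding lnth_def by (intro rfun_lhd rfun_ltl_iter)

lemma rfun_llen: "rfun n f \<Longrightarrow> rfun n (\<lambda>xs. llen (f xs))"
proof -
  assume f: "rfun n f"
  have P: "rfun 2 (\<lambda>xs. (ltl ^^ (xs ! 0)) (xs ! 1))"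
    by (intro rfun_ltl_iter rfun_proj) auto
  have reg: "\<exists>y. (ltl ^^ ((y # xs) ! 0)) ((y # xs) ! 1) = 0" for xs :: "nat list"
    using ltl_iter_0_iff by (intro exI[of _ "length (list_decode (xs ! 0))"]) simp
  have A: "rfun 1 (\<lambda>xs. LEAST y. (ltl ^^ ((y # xs) ! 0)) ((y # xs) ! 1) = 0)"
    by (rule rfun_least) (use P reg in \<open>simp_all add: numeral_2_eq_2\<close>)
  have B: "rfun 1 (\<lambda>xs. llen (xs ! 0))" by (rule rfun_cong[OF A]) (simp add: llen_def)
  show ?thesis by (rule rfun_un[OF B f])
qed




lemma rfun_tern: "rfun 3 (\<lambda>xs. F (xs ! 0) (xs ! 1) (xs ! 2)) \<Longrightarrow> rfun n f \<Longrightarrow> rfun n g \<Longrightarrow> rfun n h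
   \<Longrightarrow> rfun n (\<lambda>xs. F (f xs) (g xs) (h xs))"
  by (rule rfun_cong[OF rfun_comp3[of "\<lambda>xs. F (xs ! 0) (xs ! 1) (xs ! 2)" n f g h]]) simp_all

lemma ld_prefix: "list_decode (prefix_code p n) = map p [0..<n]"
  by (simp add: prefix_code_def)

lemma llen_prefix: "llen (prefix_code p n) = n"
  by (simp add: llen_eq ld_prefix)

lemma lnth_prefix: "k < n \<Longrightarrow> lnth (prefix_code p n) k = p k"
  by (simp add: lnth_eq ld_prefix)

section \<open>The decoder G\<close>

primrec rl :: "baire \<Rightarrow> nat \<Rightarrow> nat" where
  "rl q 0 = 0"
| "rl q (Suc m) = (if q m = 0 then 0 else Suc (rl q m))"

definition Gm :: "baire \<Rightarrow> baire" where
  "Gm q m = (if q m = 0 then Suc (rl q m) else 0)"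

primrec rlc :: "nat \<Rightarrow> nat \<Rightarrow> nat" where
  "rlc c 0 = 0"
| "rlc c (Suc m) = (if lnth c m = 0 then 0 else Suc (rlc c m))"

definition Gc :: "nat \<Rightarrow> nat \<Rightarrow> nat" where
  "Gc c m = (if lnth c m = 0 then Suc (rlc c m) else 0)"

primrec Bc :: "nat \<Rightarrow> nat \<Rightarrow> nat" where
  "Bc c 0 = 0"
| "Bc c (Suc j) = Suc (prod_encode (Gc c (llen c - Suc j), Bc c j))"

definition Tc :: "nat \<Rightarrow> nat" where
  "Tc c = Bc c (llen c)"

lemma rlc_prefix: "m \<le> n \<Longrightarrow> rlc (prefix_code q n) m = rl q m"
  by (induct m) (auto simp: lnth_prefix)

lemma Gc_prefix: "m < n \<Longrightarrow> Gc (prefix_code q n) m = Gm q m"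
  by (simp add: Gc_def Gm_def lnth_prefix rlc_prefix)

lemma Bc_eq: "j \<le> llen c \<Longrightarrow> Bc c j = list_encode (map (Gc c) [llen c - j..<llen c])"
proof (induct j)
  case 0 then show ?case by simp
next
  case (Suc j)
  have "[llen c - Suc j..<llen c] = (llen c - Suc j) # [llen c - j..<llen c]"
    using Suc.prems by (simp add: upt_conv_Cons Suc_diff_Suc)
  then show ?case using Suc by simp
qed

lemma Tc_prefix: "Tc (prefix_code q n) = prefix_code (Gm q) n"
proof -
  have "Tc (prefix_code q n) = list_encode (map (Gc (prefix_code q n)) [0..<n])"
    unfolding Tc_def using Bc_eq[of "llen (prefix_code q n)" "prefix_code q n"] by (simp add: llen_prefix)
  also have "map (Gc (prefix_code q n)) [0..<n] = map (Gm q) [0..<n]"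
    by (rule map_cong) (auto simp: Gc_prefix)
  finally show ?thesis by (simp add: prefix_code_def)
qed

lemma rfun_rlc2: "rfun 2 (\<lambda>xs. rlc (xs ! 0) (xs ! 1))"
proof -
  have A: "rfun 2 (\<lambda>xs. rec_nat 0 (\<lambda>k r. (\<lambda>zs. if lnth (zs ! 2) (zs ! 0) = 0 then 0 else Suc (zs ! 1)) (k # r # xs)) (xs ! 1))"
    by (intro rfun_iter rfun_proj rfun_const rfun_if0 rfun_lnth rfun_Suc) auto
  have B: "rec_nat 0 (\<lambda>k r. if lnth c k = 0 then 0 else Suc r) m = rlc c m" for c m
    by (induct m) auto
  show ?thesis by (rule rfun_cong[OF A]) (simp only: One_nat_def nth_Cons_Suc nth_Cons_0, simp add: B)
qed

lemma rfun_Gc2: "rfun 2 (\<lambda>xs. Gc (xs ! 0) (xs ! 1))"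
  unfolding Gc_def
  by (intro rfun_if0 rfun_lnth rfun_proj rfun_Suc rfun_const rfun_bin[OF rfun_rlc2]) auto

lemma rfun_Bc2: "rfun 2 (\<lambda>xs. Bc (xs ! 0) (xs ! 1))"
proof -
  have A: "rfun 2 (\<lambda>xs. rec_nat 0 (\<lambda>k r. (\<lambda>zs. Suc (prod_encode (Gc (zs ! 2) (llen (zs ! 2) - Suc (zs ! 0)), zs ! 1))) (k # r # xs)) (xs ! 1))"
    by (intro rfun_iter rfun_proj rfun_const rfun_Suc rfun_penc rfun_bin[OF rfun_Gc2] rfun_sub rfun_llen) auto
  have B: "rec_nat 0 (\<lambda>k r. Suc (prod_encode (Gc c (llen c - Suc k), r))) m = Bc c m" for c m
    by (induct m) auto
  show ?thesis by (rule rfun_cong[OF A]) (simp only: One_nat_def nth_Cons_Suc nth_Cons_0, simp add: B)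
qed

lemma rfun_Tc: "rfun n f \<Longrightarrow> rfun n (\<lambda>xs. Tc (f xs))"
proof -
  assume f: "rfun n f"
  have "rfun 1 (\<lambda>xs. Bc (xs ! 0) (llen (xs ! 0)))"
    by (intro rfun_bin[OF rfun_Bc2] rfun_proj rfun_llen) auto
  then have "rfun 1 (\<lambda>xs. Tc (xs ! 0))" unfolding Tc_def .
  then show ?thesis by (rule rfun_un[OF _ f])
qed

section \<open>The encoder H\<close>

primrec Pp :: "baire \<Rightarrow> nat \<Rightarrow> nat" where
  "Pp p 0 = 0"
| "Pp p (Suc k) = Pp p k + Suc (p k)"

definition H :: "baire \<Rightarrow> baire" where
  "H p i = (if \<exists>k. Pp p (Suc k) = Suc i then 0 else 1)"

primrec Pc :: "nat \<Rightarrow> nat \<Rightarrow> nat" where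
  "Pc c 0 = 0"
| "Pc c (Suc k) = Pc c k + Suc (lnth c k)"

primrec Ec :: "nat \<Rightarrow> nat \<Rightarrow> nat \<Rightarrow> nat" where
  "Ec c i 0 = 0"
| "Ec c i (Suc j) = (if Pc c (Suc j) = Suc i then 1 else Ec c i j)"

definition gH :: "nat \<Rightarrow> nat \<Rightarrow> nat" where
  "gH c i = (if i < Pc c (llen c) then (if Ec c i (llen c) = 0 then 2 else 1) else 0)"


lemma Pc_prefix: "k \<le> n \<Longrightarrow> Pc (prefix_code p n) k = Pp p k"
  by (induct k) (auto simp: lnth_prefix)

lemma Ec_iff: "Ec c i j \<noteq> 0 \<longleftrightarrow> (\<exists>k<j. Pc c (Suc k) = Suc i)"
  by (induct j) (auto simp: less_Suc_eq)

lemma Pp_less: "a < b \<Longrightarrow> Pp p a < Pp p b"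
proof (induct b)
  case 0 then show ?case by simp
next
  case (Suc b) then show ?case by (cases "a = b") auto
qed

lemma Pp_less_iff: "Pp p a < Pp p b \<longleftrightarrow> a < b"
  by (metis Pp_less linorder_neqE_nat less_asym)

lemma Pp_le_iff: "Pp p a \<le> Pp p b \<longleftrightarrow> a \<le> b"
  by (meson Pp_less_iff not_less)

lemma Pp_ge: "k \<le> Pp p k"
  by (induct k) auto

lemma gH_prefix:
  "gH (prefix_code p n) i \<in> {0, Suc (H p i)}" "gH (prefix_code p (Suc i)) i = Suc (H p i)"
proof -
  have key: "gH (prefix_code p n) i = Suc (H p i)" if i: "i < Pp p n" for n
  proof -
    have "(\<exists>k<n. Pp p (Suc k) = Suc i) \<longleftrightarrow> (\<exists>k. Pp p (Suc k) = Suc i)"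
    proof
      assume "\<exists>k. Pp p (Suc k) = Suc i"
      then obtain k where k: "Pp p (Suc k) = Suc i" by blast
      then have "Pp p (Suc k) \<le> Pp p n" using i by simp
      then have "Suc k \<le> n" by (simp only: Pp_le_iff)
      then show "\<exists>k<n. Pp p (Suc k) = Suc i" using k Suc_le_lessD by blast
    qed auto
    moreover have "(\<exists>k<n. Pc (prefix_code p n) (Suc k) = Suc i) \<longleftrightarrow> (\<exists>k<n. Pp p (Suc k) = Suc i)"
    proof -
      have eq: "k < n \<Longrightarrow> Pc (prefix_code p n) (Suc k) = Pp p (Suc k)" for k by (rule Pc_prefix) simp
      show ?thesis using eq by (auto simp del: Pc.simps Pp.simps)
    qed
    ultimately have E: "Ec (prefix_code p n) i n \<noteq> 0 \<longleftrightarrow> (\<exists>k. Pp p (Suc k) = Suc i)"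
      by (simp only: Ec_iff)
    have g: "gH (prefix_code p n) i = (if Ec (prefix_code p n) i n = 0 then 2 else 1)"
      using i by (simp add: gH_def llen_prefix Pc_prefix)
    show ?thesis
    proof (cases "\<exists>k. Pp p (Suc k) = Suc i")
      case True
      then have "H p i = 0" unfolding H_def by (simp only: if_True)
      then show ?thesis using g E True by simp
    next
      case False
      then have "H p i = 1" unfolding H_def by (simp only: if_False)
      then show ?thesis using g E False by simp
    qed
  qed
  show "gH (prefix_code p n) i \<in> {0, Suc (H p i)}"
  proof (cases "i < Pp p n")
    case True then show ?thesis using key by simp
  next
    case False then show ?thesis by (simp add: gH_def llen_prefix Pc_prefix)
  qed
  show "gH (prefix_code p (Suc i)) i = Suc (H p i)"
    by (rule key) (use Pp_ge[of "Suc i" p] in simp)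
qed

lemma rfun_Pc2: "rfun 2 (\<lambda>xs. Pc (xs ! 0) (xs ! 1))"
proof -
  have A: "rfun 2 (\<lambda>xs. rec_nat 0 (\<lambda>k r. (\<lambda>zs. zs ! 1 + Suc (lnth (zs ! 2) (zs ! 0))) (k # r # xs)) (xs ! 1))"
    by (intro rfun_iter rfun_proj rfun_const rfun_add rfun_lnth rfun_Suc) auto
  have B: "rec_nat 0 (\<lambda>k r. r + Suc (lnth c k)) m = Pc c m" for c m
    by (induct m) auto
  show ?thesis by (rule rfun_cong[OF A]) (simp only: One_nat_def nth_Cons_Suc nth_Cons_0 numeral_2_eq_2, rule B)
qed

lemma rfun_Ec3: "rfun 3 (\<lambda>xs. Ec (xs ! 0) (xs ! 1) (xs ! 2))"
proof -
  have A: "rfun 3 (\<lambda>xs. rec_nat 0 (\<lambda>k r. (\<lambda>zs. if Pc (zs ! 2) (Suc (zs ! 0)) = Suc (zs ! 3) then 1 else zs ! 1) (k # r # xs)) (xs ! 2))"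
    by (intro rfun_iter rfun_proj rfun_const rfun_ifeq rfun_bin[OF rfun_Pc2] rfun_Suc) auto
  have B: "rec_nat 0 (\<lambda>k r. if Pc c (Suc k) = Suc i then Suc 0 else r) m = Ec c i m" for c i m
    by (induct m) auto
  show ?thesis by (rule rfun_cong[OF A]) (simp only: One_nat_def nth_Cons_Suc nth_Cons_0 numeral_3_eq_3 numeral_2_eq_2, rule B)
qed

lemma rfun_gH2: "rfun 2 (\<lambda>xs. gH (xs ! 0) (xs ! 1))"
  unfolding gH_def
  by (intro rfun_ifless rfun_if0 rfun_proj rfun_const rfun_bin[OF rfun_Pc2] rfun_tern[OF rfun_Ec3] rfun_llen) auto




lemma enumerate_range_strict_mono:
  fixes e :: "nat \<Rightarrow> nat"
  assumes e: "strict_mono e"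
  shows "enumerate (range e) n = e n"
proof -
  have inf: "infinite (range e)"
    using e strict_mono_imp_inj_on range_inj_infinite by blast
  show ?thesis
  proof (induct n)
    case 0
    show ?case unfolding enumerate_0
      by (rule Least_equality) (auto simp: strict_mono_less_eq[OF e])
  next
    case (Suc n)
    show ?case unfolding enumerate_Suc''[OF inf] Suc
    proof (rule Least_equality)
      show "e (Suc n) \<in> range e \<and> e n < e (Suc n)" using e by (auto simp: strict_mono_def)
      fix y assume "y \<in> range e \<and> e n < y"
      then obtain m where "y = e m" "e n < e m" by auto
      then show "e (Suc n) \<le> y" using e by (simp add: strict_mono_less strict_mono_less_eq Suc_le_eq)
    qed
  qed
qed

lemma rl_H:
  assumes "j \<le> p k"
  shows "rl (H p) (Pp p k + j) = j"
  using assms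
proof (induct j)
  case 0
  show ?case
  proof (cases k)
    case 0 then show ?thesis by simp
  next
    case (Suc k')
    have "H p (Pp p k' + p k') = 0" unfolding H_def by (rule if_P, rule exI[of _ k'], simp)
    then show ?thesis using Suc by simp
  qed
next
  case (Suc j)
  have "\<not> (\<exists>k'. Pp p (Suc k') = Suc (Pp p k + j))"
  proof
    assume "\<exists>k'. Pp p (Suc k') = Suc (Pp p k + j)"
    then obtain k' where k': "Pp p (Suc k') = Suc (Pp p k + j)" by blast
    have "Pp p k < Pp p (Suc k')" using k' by simp
    then have 1: "k < Suc k'" by (simp only: Pp_less_iff)
    have "Pp p (Suc k') < Pp p (Suc k)" using k' Suc.prems by simp
    then have 2: "Suc k' < Suc k" by (simp only: Pp_less_iff)
    from 1 2 show False by simp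
  qed
  then have "H p (Pp p k + j) = 1" unfolding H_def by (rule if_not_P)
  then show ?case using Suc by simp
qed

lemma minus_one_GH: "minus_one (Gm (H p)) = Some p"
proof -
  define e where "e k = Pp p k + p k" for k
  have e: "strict_mono e" unfolding strict_mono_Suc_iff e_def by simp
  have S: "{n. Gm (H p) n \<noteq> 0} = range e"
  proof -
    have "Gm (H p) n \<noteq> 0 \<longleftrightarrow> H p n = 0" for n by (simp add: Gm_def)
    moreover have "H p n = 0 \<longleftrightarrow> n \<in> range e" for n
      by (auto simp: H_def e_def)
    ultimately show ?thesis by auto
  qed
  have inf: "infinite (range e)"
    using e strict_mono_imp_inj_on range_inj_infinite by blast
  have v: "Gm (H p) (e k) - 1 = p k" for k
  proof -
    have "H p (e k) = 0" unfolding H_def e_def by (rule if_P, rule exI[of _ k], simp)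
    then show ?thesis using rl_H[of "p k" p k] by (simp add: Gm_def e_def)
  qed
  have "(\<lambda>k. Gm (H p) (enumerate (range e) k) - 1) = p"
    using v by (simp add: enumerate_range_strict_mono[OF e])
  then show ?thesis unfolding minus_one_def S using inf by simp
qed

lemma H_cantor: "H p \<in> cantor_space"
  by (simp add: cantor_space_def H_def)

lemma obtain_rec2:
  assumes "rfun 2 f"
  obtains g where "rec_fn 2 g" "\<And>a b. g [a, b] = f [a, b]"
  using assms unfolding rfun_def by (metis length_Cons list.size(3) numeral_2_eq_2)

lemma computable_H: "computable_on D H"
proof -
  obtain g where g: "rec_fn 2 g" "\<And>a b. g [a, b] = (\<lambda>xs. gH (xs ! 0) (xs ! 1)) [a, b]"
    using obtain_rec2[OF rfun_gH2] by blast
  show ?thesis unfolding computable_on_def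
  proof (intro exI[of _ g] conjI ballI allI g(1))
    fix p :: baire and i n
    show "g [prefix_code p n, i] \<in> {0, Suc (H p i)}" using g(2) gH_prefix(1) by simp
  next
    fix p :: baire and i
    have "g [prefix_code p (Suc i), i] = Suc (H p i)" using g(2) gH_prefix(2) by simp
    then show "\<exists>n. g [prefix_code p n, i] = Suc (H p i)" by blast
  qed
qed

lemma computable_comp_G:
  assumes F: "computable_on UNIV F"
  shows "computable_on UNIV (\<lambda>q. F (Gm q))"
proof -
  obtain gF where gF: "rec_fn 2 gF" "\<forall>p. \<forall>i. (\<forall>n. gF [prefix_code p n, i] \<in> {0, Suc (F p i)}) \<and>
                  (\<exists>n. gF [prefix_code p n, i] = Suc (F p i))"
    using F unfolding computable_on_def by blast
  have "rfun 2 (\<lambda>xs. gF [Tc (xs ! 0), xs ! 1])"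
    by (intro rfun_comp2[OF rfun_rec[OF gF(1)]] rfun_Tc rfun_proj) auto
  then obtain g where g0: "rec_fn 2 g" "\<And>a b. g [a, b] = (\<lambda>xs. gF [Tc (xs ! 0), xs ! 1]) [a, b]"
    using obtain_rec2 by blast
  have g: "rec_fn 2 g" "\<And>a b. g [a, b] = gF [Tc a, b]" using g0 by simp_all
  show ?thesis unfolding computable_on_def
  proof (intro exI[of _ g] conjI ballI allI g(1))
    fix q :: baire and i n
    show "g [prefix_code q n, i] \<in> {0, Suc (F (Gm q) i)}"
      unfolding g(2) Tc_prefix using gF(2) by blast
  next
    fix q :: baire and i
    obtain n where "gF [prefix_code (Gm q) n, i] = Suc (F (Gm q) i)" using gF(2) by blast
    then show "\<exists>n. g [prefix_code q n, i] = Suc (F (Gm q) i)"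
      unfolding g(2) Tc_prefix by blast
  qed
qed

lemma computable_on_mono: "computable_on A F \<Longrightarrow> B \<subseteq> A \<Longrightarrow> computable_on B F"
  unfolding computable_on_def by blast

lemma computable_locally_const:
  assumes F: "computable_on UNIV F"
  shows "\<exists>n. \<forall>p'. (\<forall>k<n. p' k = p k) \<longrightarrow> F p' i = F p i"
proof -
  obtain g where g: "\<forall>p. \<forall>i. (\<forall>n. g [prefix_code p n, i] \<in> {0, Suc (F p i)}) \<and>
                  (\<exists>n. g [prefix_code p n, i] = Suc (F p i))"
    using F unfolding computable_on_def by blast
  then obtain n where n: "g [prefix_code p n, i] = Suc (F p i)" by blast
  have "F p' i = F p i" if "\<forall>k<n. p' k = p k" for p'
  proof -
    have "prefix_code p' n = prefix_code p n"
      unfolding prefix_code_def using that by (intro arg_cong[where f=list_encode] map_cong) auto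
    moreover have "g [prefix_code p' n, i] \<in> {0, Suc (F p' i)}" using g by blast
    ultimately have "Suc (F p i) \<in> {0, Suc (F p' i)}" using n by simp
    then show ?thesis by simp
  qed
  then show ?thesis by blast
qed

lemma computable_continuous:
  assumes F: "computable_on UNIV F"
  shows "continuous_on UNIV F"
proof (rule continuous_on_coordinatewise_then_product)
  fix i
  show "continuous_on UNIV (\<lambda>p. F p i)"
    unfolding continuous_on_topological
  proof (intro ballI allI impI)
    fix p :: baire and B :: "nat set" assume "F p i \<in> B"
    obtain n where n: "\<forall>p'. (\<forall>k<n. p' k = p k) \<longrightarrow> F p' i = F p i"
      using computable_locally_const[OF F] by blast
    let ?A = "{f::baire. \<forall>k\<in>{..<n}. f (id k) \<in> {p k}}"
    have "open ?A"
      using product_topology_basis'[where x="id::nat\<Rightarrow>nat" and U="\<lambda>k. {p k}" and I="{..<n}"]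
      by (simp only: finite_lessThan open_discrete simp_thms)
    moreover have "p \<in> ?A" by simp
    moreover have "\<forall>y\<in>UNIV. y \<in> ?A \<longrightarrow> F y i \<in> B"
    proof (intro ballI impI)
      fix y assume "y \<in> ?A"
      then have "\<forall>k<n. y k = p k" by simp
      then have "F y i = F p i" using n by blast
      then show "F y i \<in> B" using \<open>F p i \<in> B\<close> by simp
    qed
    ultimately show "\<exists>A. open A \<and> p \<in> A \<and> (\<forall>y\<in>UNIV. y \<in> A \<longrightarrow> F y i \<in> B)" by blast
  qed
qed




lemma compact_cantor: "compact cantor_space"
proof -
  have eq: "cantor_space = PiE UNIV (\<lambda>_. {0..1::nat})"
    by (auto simp: cantor_space_def PiE_iff)
  have "compactin (product_topology (\<lambda>_. euclidean) UNIV) (PiE UNIV (\<lambda>_. {0..1::nat}))"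
    by (subst compactin_PiE) (auto intro: finite_imp_compact)
  then show ?thesis unfolding eq euclidean_product_topology by simp
qed

theorem proposition2p8:
  fixes D :: "baire set" and \<delta>X :: "baire \<Rightarrow> 'a" and X :: "'a set"
  assumes "representation D \<delta>X X"
    and "multi_retraceable D \<delta>X X"
  shows "(\<exists>\<delta> :: baire \<Rightarrow> 'a. representation cantor_space \<delta> X \<and> rep_equiv cantor_space \<delta> D \<delta>X)
         \<and> compact_space (final_topology D \<delta>X X)"
proof -
  from assms(2) obtain r :: "'a option \<Rightarrow> 'a set" and F where r1: "\<forall>x\<in>X. r (Some x) = {x}"
    and F: "computable_on UNIV F" and Fp: "\<forall>p. F p \<in> D \<and> \<delta>X (F p) \<in> r (completion_rep D \<delta>X p)"
    unfolding multi_retraceable_def by (elim exE conjE) (rule that, assumption+)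
  have XD: "\<delta>X ` D = X" using assms(1) unfolding representation_def .
  define \<delta> where "\<delta> q = \<delta>X (F (Gm q))" for q
  have inX: "\<delta> q \<in> X" for q using Fp XD unfolding \<delta>_def by blast
  have retr: "\<delta> (H p) = \<delta>X p" if p: "p \<in> D" for p
  proof -
    have "completion_rep D \<delta>X (Gm (H p)) = Some (\<delta>X p)"
      using p by (simp add: completion_rep_def minus_one_GH)
    moreover have "\<delta>X p \<in> X" using p XD by blast
    moreover have "\<delta>X (F (Gm (H p))) \<in> r (completion_rep D \<delta>X (Gm (H p)))" using Fp by blast
    ultimately show ?thesis using r1 unfolding \<delta>_def by simp
  qed
  have rep: "representation cantor_space \<delta> X"
    unfolding representation_def
  proof
    show "\<delta> ` cantor_space \<subseteq> X" using inX by blast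
    show "X \<subseteq> \<delta> ` cantor_space"
    proof
      fix x assume "x \<in> X"
      then obtain p where "p \<in> D" "x = \<delta>X p" using XD by blast
      then show "x \<in> \<delta> ` cantor_space" using retr H_cantor by (metis image_eqI)
    qed
  qed
  have le1: "rep_le cantor_space \<delta> D \<delta>X"
    unfolding rep_le_def
    by (rule exI[of _ "\<lambda>q. F (Gm q)"])
       (use computable_on_mono[OF computable_comp_G[OF F]] Fp in \<open>auto simp: \<delta>_def\<close>)
  have le2: "rep_le D \<delta>X cantor_space \<delta>"
    unfolding rep_le_def
    by (rule exI[of _ H]) (use computable_H H_cantor retr in auto)
  have ist: "istopology (final_open D \<delta>X X)"
    by (rule istopology_final_open) (use XD in auto)
  have op: "openin (final_topology D \<delta>X X) = final_open D \<delta>X X"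
    unfolding final_topology_def using ist by simp
  have ts: "topspace (final_topology D \<delta>X X) = X"
  proof -
    have "{p \<in> D. \<delta>X p \<in> X} = D" using XD by blast
    then have "final_open D \<delta>X X X" unfolding final_open_def by simp
    moreover have "\<And>S. final_open D \<delta>X X S \<Longrightarrow> S \<subseteq> X" unfolding final_open_def by blast
    ultimately show ?thesis unfolding topspace_def op by blast
  qed
  have contPhi: "continuous_on UNIV (\<lambda>q. F (Gm q))"
    by (rule computable_continuous[OF computable_comp_G[OF F]])
  have cont: "continuous_map (top_of_set cantor_space) (final_topology D \<delta>X X) \<delta>"
    unfolding continuous_map_def
  proof (intro conjI allI impI)
    show "\<delta> \<in> topspace (top_of_set cantor_space) \<rightarrow> topspace (final_topology D \<delta>X X)"
      using inX ts by auto
    fix U assume "openin (final_topology D \<delta>X X) U"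
    then have U: "U \<subseteq> X" "openin (top_of_set D) {p \<in> D. \<delta>X p \<in> U}"
      unfolding op final_open_def by auto
    then obtain W where W: "open W" "{p \<in> D. \<delta>X p \<in> U} = D \<inter> W"
      unfolding openin_open by blast
    have eq: "{x \<in> topspace (top_of_set cantor_space). \<delta> x \<in> U} = cantor_space \<inter> ((\<lambda>q. F (Gm q)) -` W)"
    proof -
      have "\<delta> x \<in> U \<longleftrightarrow> F (Gm x) \<in> W" for x
      proof -
        have "\<delta> x \<in> U \<longleftrightarrow> F (Gm x) \<in> {p \<in> D. \<delta>X p \<in> U}" using Fp unfolding \<delta>_def by auto
        also have "\<dots> \<longleftrightarrow> F (Gm x) \<in> W" unfolding W(2) using Fp by auto
        finally show ?thesis .
      qed
      then show ?thesis by auto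
    qed
    have "open ((\<lambda>q. F (Gm q)) -` W)"
      using contPhi W(1) continuous_on_open_vimage[OF open_UNIV] by auto
    then show "openin (top_of_set cantor_space) {x \<in> topspace (top_of_set cantor_space). \<delta> x \<in> U}"
      unfolding eq openin_open by blast
  qed
  have "compactin (top_of_set cantor_space) cantor_space"
    by (simp add: compactin_subtopology compact_cantor)
  from image_compactin[OF this cont] have "compactin (final_topology D \<delta>X X) X"
    using rep unfolding representation_def by simp
  then have "compact_space (final_topology D \<delta>X X)" unfolding compact_space_def ts .
  then show ?thesis using rep le1 le2 unfolding rep_equiv_def by blast
qed


end
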